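(* Let $p$ be a prime, $\Omega=\mathbb{F}_p[[T]]$ and $\Omega_n=\Omega/(T^n)$ for $n\ge 1$. Let $\mathcal{M}$ be the set of pairs $(N_1,N_2)$ of maximal submodules of $\Omega^2$, equipped with the inverse-limit probability space $(\mathcal{M},\mathcal{A},\mathbb{P})$ described in the context, and let $\mathbb{P}^*$ be the associated outer measure. Then \[\mathbb{P}^*\big(\{(N_1,N_2)\in\mathcal{M}\mid N_1\cap N_2=0\}\big)=1.\] Furthermore, \[\sup\{\mathbb{P}(B)\mid B\in\mathcal{A},\ B\subset \{(N_1,N_2)\in\mathcal{M}\mid N_1\cap N_2=0\}\}=1.\]
   Context: A cyclic submodule $N\subset\Omega^2$ (resp. $N\subset\Omega_n^2$) is called maximal if it is not contained in $T\Omega^2$ (resp. $T\Omega_n^2$). Let $\mathcal{M}_n$ be the (finite) set of pairs $(\bar N_1,\bar N_2)$ of maximal submodules of $\Omega_n^2$, with $\mathcal{A}_n$ its power set and $\mathbb{P}_n$ the uniform probability measure on $\mathcal{M}_n$. Reduction modulo $T^n$ gives projections $\pi_n:\mathcal{M}\to\mathcal{M}_n$ and $\pi_{m,n}:\mathcal{M}_m\to\mathcal{M}_n$ ($m\ge n$), so that $\mathcal{M}=\varprojlim_n\mathcal{M}_n$ and $((\mathcal{M}_n,\mathcal{A}_n,\mathbb{P}_n),\pi_{m,n})$ is a projective system of probability spaces; $(\mathcal{M},\mathcal{A},\mathbb{P})$ denotes its inverse limit (so $\mathbb{P}(\pi_n^{-1}(A))=\mathbb{P}_n(A)$ for $A\in\mathcal{A}_n$).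 For any $X\subset\mathcal{M}$, $\mathbb{P}^*(X):=\inf_{X\subset B\in\mathcal{A}}\mathbb{P}(B)$. *)

theory Defs
  imports "HOL-Probability.Probability" "HOL-Computational_Algebra.Formal_Power_Series"
begin

text \<open>Omega = k[[T]] is the type 'k fps, with k a finite field of prime order p (i.e. F_p).  Omega_n = Omega/(T^n) is represented by the truncated series
  (fps_cutoff n), and Omega_n^2 by truncated pairs.\<close>

type_synonym 'k vec2 = "'k fps \<times> 'k fps"

definition cyclic_sub :: "'k::comm_ring_1 vec2 \<Rightarrow> 'k vec2 set" where
  "cyclic_sub v = {(c * fst v, c * snd v) | c. True}"

definition T_Omega2 :: "'k::comm_ring_1 vec2 set" where
  "T_Omega2 = {(fps_X * a, fps_X * b) | a b. True}"

definition maximal_sub :: "'k::comm_ring_1 vec2 set \<Rightarrow> bool" where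
  "maximal_sub N \<longleftrightarrow> (\<exists>v. N = cyclic_sub v) \<and> \<not> N \<subseteq> T_Omega2"

definition trunc2 :: "nat \<Rightarrow> 'k::comm_ring_1 vec2 \<Rightarrow> 'k vec2" where
  "trunc2 n v = (fps_cutoff n (fst v), fps_cutoff n (snd v))"

definition Omega2_n :: "nat \<Rightarrow> 'k::comm_ring_1 vec2 set" where
  "Omega2_n n = range (trunc2 n)"

definition cyclic_sub_n :: "nat \<Rightarrow> 'k::comm_ring_1 vec2 \<Rightarrow> 'k vec2 set" where
  "cyclic_sub_n n v = {trunc2 n (c * fst v, c * snd v) | c. True}"

definition T_Omega2_n :: "nat \<Rightarrow> 'k::comm_ring_1 vec2 set" where
  "T_Omega2_n n = {trunc2 n (fps_X * a, fps_X * b) | a b. True}"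

definition maximal_sub_n :: "nat \<Rightarrow> 'k::comm_ring_1 vec2 set \<Rightarrow> bool" where
  "maximal_sub_n n N \<longleftrightarrow> (\<exists>v\<in>Omega2_n n. N = cyclic_sub_n n v) \<and> \<not> N \<subseteq> T_Omega2_n n"

definition MM :: "('k::comm_ring_1 vec2 set \<times> 'k vec2 set) set" where
  "MM = {(N1, N2). maximal_sub N1 \<and> maximal_sub N2}"

definition MM_n :: "nat \<Rightarrow> ('k::comm_ring_1 vec2 set \<times> 'k vec2 set) set" where
  "MM_n n = {(N1, N2). maximal_sub_n n N1 \<and> maximal_sub_n n N2}"

definition proj_n :: "nat \<Rightarrow> ('k::comm_ring_1 vec2 set \<times> 'k vec2 set) \<Rightarrow> ('k vec2 set \<times> 'k vec2 set)" where
  "proj_n n x = (trunc2 n ` fst x, trunc2 n ` snd x)"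

definition P_n :: "nat \<Rightarrow> ('k::comm_ring_1 vec2 set \<times> 'k vec2 set) set \<Rightarrow> real" where
  "P_n n A = real (card A) / real (card (MM_n n :: ('k vec2 set \<times> 'k vec2 set) set))"

definition cylinders :: "('k::comm_ring_1 vec2 set \<times> 'k vec2 set) set set" where
  "cylinders = {MM \<inter> proj_n n -` A | n A. 1 \<le> n \<and> A \<subseteq> MM_n n}"

definition is_inverse_limit_measure :: "('k::comm_ring_1 vec2 set \<times> 'k vec2 set) measure \<Rightarrow> bool" where
  "is_inverse_limit_measure P \<longleftrightarrow>
     prob_space P \<and> space P = MM \<and> sets P = sigma_sets MM cylinders \<and>
     (\<forall>n A. 1 \<le> n \<longrightarrow> A \<subseteq> MM_n n \<longrightarrow> measure P (MM \<inter> proj_n n -` A) = P_n n A)"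

definition outer_P :: "('k::comm_ring_1 vec2 set \<times> 'k vec2 set) measure \<Rightarrow> ('k vec2 set \<times> 'k vec2 set) set \<Rightarrow> real" where
  "outer_P P X = Inf {measure P B | B. B \<in> sets P \<and> X \<subseteq> B}"

end

theory Submission
  imports Defs
begin

lemma cutoff_mult: "fps_cutoff n (c * fps_cutoff n a) = fps_cutoff n (c * (a::'a::comm_ring_1 fps))"
  by (simp add: fps_cutoff_eq_fps_cutoff_iff fps_cutoff_right_mult_nth)

lemma X_factor: "fps_nth (f::'a::comm_ring_1 fps) 0 = 0 \<Longrightarrow> f = fps_X * fps_shift 1 f"
  by (intro fps_ext) auto

lemma primitive:
  assumes "maximal_sub N"
  shows "\<exists>v. N = cyclic_sub v \<and> (fps_nth (fst v) 0 \<noteq> 0 \<or> fps_nth (snd v) 0 \<noteq> (0::'a::comm_ring_1))"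
proof -
  obtain v where v: "N = cyclic_sub v" and nt: "\<not> N \<subseteq> T_Omega2" using assms maximal_sub_def by blast
  have "fps_nth (fst v) 0 \<noteq> 0 \<or> fps_nth (snd v) 0 \<noteq> 0"
  proof (rule ccontr)
    assume "\<not> ?thesis"
    then have a: "fst v = fps_X * fps_shift 1 (fst v)" and b: "snd v = fps_X * fps_shift 1 (snd v)"
      using X_factor by blast+
    have "N \<subseteq> T_Omega2"
    proof
      fix z assume "z \<in> N"
      then obtain c where z: "z = (c * fst v, c * snd v)" using v cyclic_sub_def by blast
      have "z = (fps_X * (c * fps_shift 1 (fst v)), fps_X * (c * fps_shift 1 (snd v)))"
        using z a b by (metis mult.left_commute)
      then show "z \<in> T_Omega2" unfolding T_Omega2_def by blast
    qed
    with nt show False by blast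
  qed
  with v show ?thesis by blast
qed
lemma core:
  fixes v1 v2 w1 w2 c d :: "'a::field fps"
  assumes v1: "fps_nth v1 0 \<noteq> 0" and w: "fps_nth w1 0 \<noteq> 0 \<or> fps_nth w2 0 \<noteq> 0"
    and e1: "c * v1 = d * w1" and e2: "c * v2 = d * w2" and d: "d \<noteq> 0"
  shows "\<exists>e. fps_nth e 0 \<noteq> 0 \<and> w1 = e * v1 \<and> w2 = e * v2"
proof -
  define e where "e = w1 * inverse v1"
  have iv: "inverse v1 * v1 = 1" using v1 by (rule inverse_mult_eq_1)
  have h1: "w1 = e * v1" unfolding e_def using iv by (simp add: mult.assoc)
  have "c = c * v1 * inverse v1" using iv by (simp add: mult.assoc mult.commute)
  also have "\<dots> = d * e" using e1 by (simp add: e_def mult.assoc)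
  finally have "c = d * e" .
  then have "d * w2 = d * (e * v2)" using e2 by (metis mult.assoc)
  then have h2: "w2 = e * v2" using d by auto
  have "fps_nth e 0 \<noteq> 0"
  proof
    assume "fps_nth e 0 = 0"
    then show False using w h1 h2 by simp
  qed
  with h1 h2 show ?thesis by blast
qed

lemma unit_cyc:
  fixes e :: "'a::field fps"
  assumes "fps_nth e 0 \<noteq> 0"
  shows "cyclic_sub (e * fst v, e * snd v) = cyclic_sub v"
proof -
  have iv: "inverse e * e = 1" using assms by (rule inverse_mult_eq_1)
  show ?thesis
  proof (intro set_eqI iffI)
    fix z assume "z \<in> cyclic_sub (e * fst v, e * snd v)"
    then obtain c where "z = (c * (e * fst v), c * (e * snd v))" unfolding cyclic_sub_def by auto
    then have "z = ((c * e) * fst v, (c * e) * snd v)" by (simp add: mult.assoc)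
    then show "z \<in> cyclic_sub v" unfolding cyclic_sub_def by blast
  next
    fix z assume "z \<in> cyclic_sub v"
    then obtain c where "z = (c * fst v, c * snd v)" unfolding cyclic_sub_def by auto
    then have "z = ((c * inverse e) * (e * fst v), (c * inverse e) * (e * snd v))"
      by (simp add: mult.assoc iv flip: mult.assoc[of "inverse e"])
    then show "z \<in> cyclic_sub (e * fst v, e * snd v)" unfolding cyclic_sub_def by auto
  qed
qed

lemma max_eq:
  fixes N1 N2 :: "'a::field vec2 set"
  assumes "maximal_sub N1" "maximal_sub N2" "N1 \<inter> N2 \<noteq> {0}"
  shows "N1 = N2"
proof -
  obtain v where v: "N1 = cyclic_sub v" and pv: "fps_nth (fst v) 0 \<noteq> 0 \<or> fps_nth (snd v) 0 \<noteq> 0"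
    using primitive assms(1) by blast
  obtain w where w: "N2 = cyclic_sub w" and pw: "fps_nth (fst w) 0 \<noteq> 0 \<or> fps_nth (snd w) 0 \<noteq> 0"
    using primitive assms(2) by blast
  have "(0::'a vec2) \<in> N1 \<inter> N2" unfolding v w cyclic_sub_def zero_prod_def by force
  then obtain z where z: "z \<in> N1" "z \<in> N2" "z \<noteq> 0" using assms(3) by blast
  obtain c where c: "z = (c * fst v, c * snd v)" using z(1) v cyclic_sub_def by blast
  obtain d where dd: "z = (d * fst w, d * snd w)" using z(2) w cyclic_sub_def by blast
  have d: "d \<noteq> 0" using z(3) dd by (auto simp: zero_prod_def)
  have e1: "c * fst v = d * fst w" and e2: "c * snd v = d * snd w" using c dd by auto
  obtain e where e: "fps_nth e 0 \<noteq> 0" "fst w = e * fst v" "snd w = e * snd v"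
  proof (cases "fps_nth (fst v) 0 \<noteq> 0")
    case True
    then show ?thesis using core[OF True pw e1 e2 d] that by blast
  next
    case False
    then have "fps_nth (snd v) 0 \<noteq> 0" using pv by blast
    moreover have "fps_nth (snd w) 0 \<noteq> 0 \<or> fps_nth (fst w) 0 \<noteq> 0" using pw by blast
    ultimately show ?thesis using core[OF _ _ e2 e1 d] that by blast
  qed
  have "w = (e * fst v, e * snd v)" using e by (simp add: prod_eq_iff)
  then show ?thesis using v w unit_cyc[OF e(1)] by simp
qed
lemma trunc_max:
  fixes N :: "'a::field vec2 set"
  assumes "maximal_sub N" "1 \<le> n"
  shows "maximal_sub_n n (trunc2 n ` N)"
proof -
  obtain v where v: "N = cyclic_sub v" and pv: "fps_nth (fst v) 0 \<noteq> 0 \<or> fps_nth (snd v) 0 \<noteq> 0"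
    using primitive assms(1) by blast
  have eq: "trunc2 n ` N = cyclic_sub_n n (trunc2 n v)"
  proof (intro set_eqI iffI)
    fix z assume "z \<in> trunc2 n ` N"
    then obtain c where "z = trunc2 n (c * fst v, c * snd v)" unfolding v cyclic_sub_def by auto
    then show "z \<in> cyclic_sub_n n (trunc2 n v)" unfolding cyclic_sub_n_def trunc2_def
      by (auto simp: cutoff_mult)
  next
    fix z assume "z \<in> cyclic_sub_n n (trunc2 n v)"
    then obtain c where "z = trunc2 n (c * fst (trunc2 n v), c * snd (trunc2 n v))"
      unfolding cyclic_sub_n_def by auto
    then have "z = trunc2 n (c * fst v, c * snd v)" unfolding trunc2_def by (simp add: cutoff_mult)
    then show "z \<in> trunc2 n ` N" unfolding v cyclic_sub_def by auto
  qed
  have mem: "trunc2 n v \<in> trunc2 n ` N" unfolding v cyclic_sub_def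
    by (rule imageI) (auto intro: exI[of _ 1])
  have "trunc2 n v \<notin> T_Omega2_n n"
  proof
    assume "trunc2 n v \<in> T_Omega2_n n"
    then obtain a b where "trunc2 n v = trunc2 n (fps_X * a, fps_X * b)" unfolding T_Omega2_n_def by blast
    then have "fps_cutoff n (fst v) = fps_cutoff n (fps_X * a)" "fps_cutoff n (snd v) = fps_cutoff n (fps_X * b)"
      unfolding trunc2_def by auto
    then have "fps_nth (fps_cutoff n (fst v)) 0 = 0" "fps_nth (fps_cutoff n (snd v)) 0 = 0"
      by simp_all
    then show False using pv assms(2) by simp
  qed
  then show ?thesis unfolding maximal_sub_n_def Omega2_n_def using eq mem by blast
qed

lemma card_S:
  assumes "1 \<le> n" "finite {N :: 'a::field vec2 set. maximal_sub_n n N}"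
  shows "n \<le> card {N :: 'a::field vec2 set. maximal_sub_n n N}"
proof -
  define f where "f k = cyclic_sub_n n (1::'a fps, fps_X ^ k)" for k :: nat
  have tr: "trunc2 n (1::'a fps, fps_X ^ k) = (1, fps_X ^ k)" if "k < n" for k
    unfolding trunc2_def using that assms(1) by (auto simp: fps_cutoff_one intro!: fps_ext)
  have mem: "(1, fps_X ^ k) \<in> f k" if "k < n" for k
    unfolding f_def cyclic_sub_n_def using tr[OF that] by (auto intro!: exI[of _ 1])
  have sub: "f k \<in> {N. maximal_sub_n n N}" if "k < n" for k
  proof -
    have "(1::'a fps, fps_X ^ k) \<notin> T_Omega2_n n"
    proof
      assume "(1::'a fps, fps_X ^ k) \<in> T_Omega2_n n"
      then obtain a b :: "'a fps" where "(1, fps_X ^ k) = trunc2 n (fps_X * a, fps_X * b)"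
        unfolding T_Omega2_n_def by blast
      then have "fps_nth (1::'a fps) 0 = fps_nth (fps_cutoff n (fps_X * a)) 0" unfolding trunc2_def by auto
      then show False using assms(1) by simp
    qed
    moreover have "(1::'a fps, fps_X ^ k) \<in> Omega2_n n" unfolding Omega2_n_def using tr[OF that] by (metis rangeI)
    ultimately show ?thesis unfolding maximal_sub_n_def f_def using mem[OF that] f_def by auto
  qed
  have inj: "inj_on f {..<n}"
  proof (rule inj_onI)
    fix j k assume j: "j \<in> {..<n}" and k: "k \<in> {..<n}" and e: "f j = f k"
    have "(1, fps_X ^ j) \<in> f k" using mem[of j] j e by auto
    then obtain c :: "'a fps" where c: "(1, fps_X ^ j) = trunc2 n (c * 1, c * fps_X ^ k)"
      unfolding f_def cyclic_sub_n_def by auto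
    then have c1: "fps_cutoff n c = 1" and c2: "fps_X ^ j = fps_cutoff n (c * fps_X ^ k)"
      unfolding trunc2_def by auto
    have "fps_nth (fps_X ^ j :: 'a fps) j = fps_nth (fps_cutoff n (c * fps_X ^ k)) j" using c2 by simp
    then have h: "1 = (if j < k then 0 else fps_nth c (j - k))" using j by (simp add: fps_X_power_mult_right_nth)
    then have jk: "k \<le> j" by (auto split: if_splits)
    have "fps_nth (fps_cutoff n c) (j - k) = fps_nth (1::'a fps) (j - k)" using c1 by simp
    then have "fps_nth c (j - k) = fps_nth (1::'a fps) (j - k)" using j by (auto split: if_splits)
    then show "j = k" using h jk by (auto split: if_splits)
  qed
  have "card {..<n} \<le> card {N :: 'a vec2 set. maximal_sub_n n N}"
    by (rule card_inj_on_le[OF inj _ assms(2)]) (use sub in auto)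
  then show ?thesis by simp
qed
lemma real_ge1: fixes a :: real assumes "\<And>n::nat. 1 \<le> n \<Longrightarrow> 1 - 1 / real n \<le> a" shows "1 \<le> a"
proof (rule ccontr)
  assume "\<not> 1 \<le> a"
  then have "0 < 1 - a" by simp
  then obtain n :: nat where n: "inverse (real (Suc n)) < 1 - a" using reals_Archimedean by blast
  have "1 - 1 / real (Suc n) \<le> a" using assms[of "Suc n"] by simp
  with n show False by (simp add: field_simps)
qed

lemma ne_imp: "x \<in> A \<Longrightarrow> A \<noteq> {}" by auto

lemma key:
  fixes P :: "('k::{field,finite} vec2 set \<times> 'k vec2 set) measure"
  assumes P: "is_inverse_limit_measure P" and n: "1 \<le> n"
  shows "\<exists>B. B \<in> sets P \<and> B \<subseteq> {(N1, N2) \<in> MM. N1 \<inter> N2 = {0}} \<and> 1 - 1 / real n \<le> measure P B"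
proof -
  have ps: "prob_space P" and sp: "space P = MM" and ss: "sets P = sigma_sets MM cylinders"
    and mP: "\<And>A. A \<subseteq> MM_n n \<Longrightarrow> measure P (MM \<inter> proj_n n -` A) = P_n n A"
    using P n unfolding is_inverse_limit_measure_def by auto
  define S where "S = {N :: 'k vec2 set. maximal_sub_n n N}"
  define D where "D = {x \<in> (MM_n n :: ('k vec2 set \<times> 'k vec2 set) set). fst x = snd x}"
  define C where "C = MM \<inter> proj_n n -` D"
  have MMn: "(MM_n n :: ('k vec2 set \<times> 'k vec2 set) set) = S \<times> S" unfolding MM_n_def S_def by auto
  have Deq: "D = (\<lambda>N. (N, N)) ` S" unfolding D_def MMn by auto
  have cD: "card D = card S" unfolding Deq by (rule card_image) (auto intro: inj_onI)
  have cM: "card (MM_n n :: ('k vec2 set \<times> 'k vec2 set) set) = card S * card S"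
    unfolding MMn by (rule card_cartesian_product)
  have "C \<in> cylinders" unfolding C_def cylinders_def D_def using n by blast
  then have Cs: "C \<in> sets P" unfolding ss by (rule sigma_sets.Basic)
  have mC: "measure P C = real (card S) / real (card S * card S)"
  proof -
    have "measure P C = P_n n D" unfolding C_def by (rule mP) (auto simp: D_def)
    then show ?thesis by (simp add: P_n_def cD cM)
  qed
  have mC': "measure P C \<le> 1 / real n"
  proof (cases "card S = 0")
    case True then show ?thesis using mC by simp
  next
    case False
    then have "finite S" by (meson card.infinite)
    then have "n \<le> card S" unfolding S_def using card_S n by blast
    then show ?thesis using mC False n by (simp add: frac_le)
  qed
  define B where "B = space P - C"
  have Bs: "B \<in> sets P" unfolding B_def using Cs by auto
  have mB: "measure P B = 1 - measure P C" unfolding B_def using prob_space.prob_compl[OF ps Cs] .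
  have Bsub: "B \<subseteq> {(N1, N2) \<in> MM. N1 \<inter> N2 = {0}}"
  proof
    fix x assume "x \<in> B"
    then have x: "x \<in> MM" "proj_n n x \<notin> D" unfolding B_def C_def sp by auto
    obtain N1 N2 where xx: "x = (N1, N2)" by force
    have m: "maximal_sub N1" "maximal_sub N2" using x(1) xx unfolding MM_def by auto
    have "proj_n n x \<in> MM_n n" unfolding xx proj_n_def MM_n_def using trunc_max[OF m(1) n] trunc_max[OF m(2) n] by simp
    then have "trunc2 n ` N1 \<noteq> trunc2 n ` N2" using x(2) unfolding D_def xx proj_n_def by auto
    then have "N1 \<noteq> N2" by auto
    then have "N1 \<inter> N2 = {0}" using max_eq[OF m] by blast
    then show "x \<in> {(N1, N2) \<in> MM. N1 \<inter> N2 = {0}}" using x(1) xx by simp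
  qed
  show ?thesis using Bs Bsub mB mC' by (intro exI[of _ B]) auto
qed

theorem theorem4p8:
  fixes P :: "('k::{field,finite} vec2 set \<times> 'k vec2 set) measure"
  assumes "prime CARD('k)"
    and "is_inverse_limit_measure P"
  shows "outer_P P {(N1, N2) \<in> MM. N1 \<inter> N2 = {0}} = 1 \<and>
         Sup {measure P B | B. B \<in> sets P \<and> B \<subseteq> {(N1, N2) \<in> MM. N1 \<inter> N2 = {0}}} = 1"
proof -
  let ?X = "{(N1, N2) \<in> (MM :: ('k vec2 set \<times> 'k vec2 set) set). N1 \<inter> N2 = {0}}"
  have ps: "prob_space P" and sp: "space P = MM"
    using assms(2) unfolding is_inverse_limit_measure_def by auto
  have le1: "measure P B \<le> 1" for B using prob_space.prob_le_1[OF ps] .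
  have inf: "outer_P P ?X = 1" unfolding outer_P_def
  proof (rule cInf_eq_minimum)
    show "1 \<in> {measure P B |B. B \<in> sets P \<and> ?X \<subseteq> B}"
    proof -
      have "?X \<subseteq> space P" unfolding sp by blast
      moreover have "space P \<in> sets P" by (rule sets.top)
      ultimately have "measure P (space P) \<in> {measure P B |B. B \<in> sets P \<and> ?X \<subseteq> B}"
        by (intro CollectI exI[of _ "space P"] conjI refl)
      moreover have m1: "measure P (space P) = 1" by (rule prob_space.prob_space[OF ps])
      ultimately show ?thesis by (simp only: m1)
    qed
  next
    fix y assume "y \<in> {measure P B |B. B \<in> sets P \<and> ?X \<subseteq> B}"
    then have "\<exists>B. y = measure P B \<and> B \<in> sets P \<and> ?X \<subseteq> B" by (simp only: mem_Collect_eq)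
    then obtain B where BB: "y = measure P B \<and> B \<in> sets P \<and> ?X \<subseteq> B" ..
    have B: "y = measure P B" "B \<in> sets P" "?X \<subseteq> B"
      using BB by (rule conjunct1, rule conjunct1[OF conjunct2], rule conjunct2[OF conjunct2])
    show "1 \<le> y"
    proof (rule real_ge1)
      fix n :: nat assume "1 \<le> n"
      then have "\<exists>B. B \<in> sets P \<and> B \<subseteq> ?X \<and> 1 - 1 / real n \<le> measure P B" by (rule key[OF assms(2)])
      then obtain B' where BB': "B' \<in> sets P \<and> B' \<subseteq> ?X \<and> 1 - 1 / real n \<le> measure P B'" ..
      have B': "B' \<in> sets P" "B' \<subseteq> ?X" "1 - 1 / real n \<le> measure P B'"
        using BB' by (rule conjunct1, rule conjunct1[OF conjunct2], rule conjunct2[OF conjunct2])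
      have "B' \<subseteq> B" using B'(2) B(3) by (rule order_trans)
      then have "measure P B' \<le> measure P B"
        using B(2) by (rule finite_measure.finite_measure_mono[OF prob_space.axioms(1)[OF ps]])
      then show "1 - 1 / real n \<le> y" using B'(3) B(1) by linarith
    qed
  qed
  have sup: "Sup {measure P B | B. B \<in> sets P \<and> B \<subseteq> ?X} = 1"
  proof (rule cSup_eq_non_empty)
    have "{} \<in> sets P" by (rule sets.empty_sets)
    then have "measure P {} \<in> {measure P B | B. B \<in> sets P \<and> B \<subseteq> ?X}"
      by (intro CollectI exI[of _ "{}"] conjI refl empty_subsetI)
    then show "{measure P B | B. B \<in> sets P \<and> B \<subseteq> ?X} \<noteq> {}" by (rule ne_imp)
  next
    fix x assume "x \<in> {measure P B | B. B \<in> sets P \<and> B \<subseteq> ?X}"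
    then have "\<exists>B. x = measure P B" by (auto simp only: mem_Collect_eq)
    then show "x \<le> 1" using le1 by (elim exE) simp
  next
    fix y assume y: "\<And>x. x \<in> {measure P B | B. B \<in> sets P \<and> B \<subseteq> ?X} \<Longrightarrow> x \<le> y"
    show "1 \<le> y"
    proof (rule real_ge1)
      fix n :: nat assume "1 \<le> n"
      then have "\<exists>B. B \<in> sets P \<and> B \<subseteq> ?X \<and> 1 - 1 / real n \<le> measure P B" by (rule key[OF assms(2)])
      then obtain B' where BB': "B' \<in> sets P \<and> B' \<subseteq> ?X \<and> 1 - 1 / real n \<le> measure P B'" ..
      have B': "B' \<in> sets P" "B' \<subseteq> ?X" "1 - 1 / real n \<le> measure P B'"
        using BB' by (rule conjunct1, rule conjunct1[OF conjunct2], rule conjunct2[OF conjunct2])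
      have "measure P B' \<in> {measure P B | B. B \<in> sets P \<and> B \<subseteq> ?X}"
        using B'(1,2) by (intro CollectI exI[of _ B'] conjI refl)
      then have "measure P B' \<le> y" by (rule y)
      then show "1 - 1 / real n \<le> y" using B'(3) by linarith
    qed
  qed
  show ?thesis using inf sup by (rule conjI)
qed

end
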